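(* Let $l,d\ge1$ be integers and let $f:\mathbb{R}^l\to\mathbb{R}$ be a polynomial of degree at most $d$, $f(x)=\sum_{|S|\le d}c_S\chi_S(x)$, where $S$ ranges over multisets of elements of $[l]$ of size at most $d$ and $\chi_S(x)=\prod_{i\in S}x_i$. Let $\mathcal{G}\sim N(0,1)^l$ be a standard Gaussian vector. Then for every multiset $T\subseteq[l]$ with $|T|\le d$, $$\|f(\mathcal{G})\|_2\ \ge\ d^{-d}\cdot |c_T|\Big/\binom{l+d}{d},$$ where $\|f(\mathcal{G})\|_2=\mathbb{E}[f(\mathcal{G})^2]^{1/2}$. *)

theory Defs
  imports "HOL-Probability.Probability" "HOL-Library.Multiset"
begin

definition mono_idx :: "nat \<Rightarrow> nat \<Rightarrow> nat multiset set" where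
  "mono_idx l d = {S. set_mset S \<subseteq> {..<l} \<and> size S \<le> d}"

definition chi :: "nat multiset \<Rightarrow> (nat \<Rightarrow> real) \<Rightarrow> real" where
  "chi S x = prod_mset (image_mset x S)"

definition poly_f :: "nat \<Rightarrow> nat \<Rightarrow> (nat multiset \<Rightarrow> real) \<Rightarrow> (nat \<Rightarrow> real) \<Rightarrow> real" where
  "poly_f l d c x = (\<Sum>S\<in>mono_idx l d. c S * chi S x)"

definition gauss :: "nat \<Rightarrow> (nat \<Rightarrow> real) measure" where
  "gauss l = PiM {..<l} (\<lambda>_. density lborel std_normal_density)"

definition L2norm :: "'a measure \<Rightarrow> ('a \<Rightarrow> real) \<Rightarrow> real" where
  "L2norm M X = sqrt (\<integral>x. (X x)\<^sup>2 \<partial>M)"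

end

theory Submission
  imports Defs "HOL-Computational_Algebra.Polynomial"
begin


abbreviation NN :: "real measure" where "NN \<equiv> density lborel std_normal_density"

definition mom :: "nat \<Rightarrow> real" where
  "mom k = (if even k then fact k / (2 ^ (k div 2) * fact (k div 2)) else 0)"

lemma NN_integrable_pow: "integrable NN (\<lambda>x. x ^ k)"
  by (subst integrable_density) (auto simp: integrable_std_normal_moment)

lemma NN_integral_pow: "integral\<^sup>L NN (\<lambda>x. x ^ k) = mom k"
proof -
  have "integral\<^sup>L NN (\<lambda>x. x ^ k) = integral\<^sup>L lborel (\<lambda>x. std_normal_density x * x ^ k)"
    by (subst integral_density) auto
  also have "\<dots> = mom k"
  proof (cases "even k")
    case True
    then obtain n where "k = 2 * n" by auto
    then show ?thesis using integral_std_normal_moment_even[of n] by (simp add: mom_def)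
  next
    case False
    then obtain n where "k = 2 * n + 1" using oddE by blast
    then show ?thesis using integral_std_normal_moment_odd[of n] by (simp add: mom_def)
  qed
  finally show ?thesis .
qed

lemma mom_rec: "mom (Suc (Suc j)) = real (Suc j) * mom j"
proof (cases "even j")
  case True
  then obtain n where n: "j = 2 * n" by auto
  have "Suc (Suc j) = 2 * Suc n" using n by simp
  have f1: "fact (2 * Suc n) = 2 * real (n+1) * real (2*n+1) * (fact (2*n) :: real)"
    by (simp add: fact_Suc algebra_simps)
  have f2: "fact (Suc n) = real (n+1) * (fact n :: real)" by simp
  have "mom (Suc (Suc j)) = fact (2 * Suc n) / (2 ^ Suc n * fact (Suc n))"
    unfolding mom_def using \<open>Suc (Suc j) = 2 * Suc n\<close> by simp
  also have "\<dots> = (2 * real (n+1)) * (real (2*n+1) * fact (2*n)) / ((2 * real (n+1)) * (2^n * fact n))"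
    unfolding f1 f2 power_Suc by (simp only: mult_ac)
  also have "\<dots> = (real (2*n+1) * fact (2*n)) / (2^n * fact n)"
    by (rule nonzero_mult_divide_mult_cancel_left) simp
  also have "\<dots> = real (2*n+1) * (fact (2*n) / (2^n * fact n))" by simp
  also have "\<dots> = real (Suc j) * mom j" using n by (simp add: mom_def)
  finally show ?thesis .
next
  case False
  then show ?thesis by (simp add: mom_def)
qed

lemma mom_0 [simp]: "mom 0 = 1" by (simp add: mom_def)
lemma mom_1 [simp]: "mom (Suc 0) = 0" by (simp add: mom_def)

definition LL :: "real poly \<Rightarrow> real" where "LL p = integral\<^sup>L NN (poly p)"

lemma NN_integrable_poly: "integrable NN (\<lambda>x. poly p x)"
  unfolding poly_altdef
  using NN_integrable_pow by auto

lemma LL_add: "LL (p + q) = LL p + LL q"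
proof -
  have "poly (p+q) = (\<lambda>x. poly p x + poly q x)" by auto
  then show ?thesis unfolding LL_def by (simp add: NN_integrable_poly)
qed
lemma LL_diff: "LL (p - q) = LL p - LL q"
proof -
  have "poly (p-q) = (\<lambda>x. poly p x - poly q x)" by auto
  then show ?thesis unfolding LL_def by (simp add: NN_integrable_poly)
qed
lemma LL_smult: "LL (smult a p) = a * LL p"
proof -
  have "poly (smult a p) = (\<lambda>x. a * poly p x)" by auto
  then show ?thesis unfolding LL_def by simp
qed
lemma LL_sum: "LL (\<Sum>i\<in>A. f i) = (\<Sum>i\<in>A. LL (f i))"
proof -
  have "poly (\<Sum>i\<in>A. f i) = (\<lambda>x. \<Sum>i\<in>A. poly (f i) x)" by (auto simp: poly_sum)
  then show ?thesis unfolding LL_def by (simp add: NN_integrable_poly)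
qed
lemma LL_monom: "LL (monom a k) = a * mom k"
proof -
  have "poly (monom a k) = (\<lambda>x. a * x ^ k)" by (auto simp: poly_monom)
  then show ?thesis unfolding LL_def by (simp add: NN_integral_pow)
qed
lemma LL_1 [simp]: "LL 1 = 1"
  using LL_monom[of 1 0] by simp

lemma pderiv_sum': "pderiv (\<Sum>i\<in>A. f i) = (\<Sum>i\<in>A. pderiv (f i))"
  by (induction A rule: infinite_finite_induct) (auto simp: pderiv_add)

lemma LL_stein: "LL ([:0,1:] * p) = LL (pderiv p)"
proof -
  have "[:0,1:] * (\<Sum>i\<le>degree p. monom (coeff p i) i) = (\<Sum>i\<le>degree p. monom (coeff p i) (Suc i))"
    by (simp add: sum_distrib_left mult_monom monom_Suc)
  then have e1: "[:0,1:] * p = (\<Sum>i\<le>degree p. monom (coeff p i) (Suc i))"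
    by (simp add: poly_as_sum_of_monoms)
  have "pderiv (\<Sum>i\<le>degree p. monom (coeff p i) i) = (\<Sum>i\<le>degree p. monom (of_nat i * coeff p i) (i - 1))"
    by (simp add: pderiv_sum' pderiv_monom)
  then have e2: "pderiv p = (\<Sum>i\<le>degree p. monom (of_nat i * coeff p i) (i - 1))"
    by (simp add: poly_as_sum_of_monoms)
  have h: "\<And>i. coeff p i * mom (Suc i) = of_nat i * coeff p i * mom (i - 1)"
    by (case_tac i) (auto simp: mom_rec)
  show ?thesis by (simp only: e1 e2 LL_sum LL_monom h)
qed



fun He :: "nat \<Rightarrow> real poly" where
  "He 0 = 1"
| "He (Suc 0) = [:0,1:]"
| "He (Suc (Suc n)) = [:0,1:] * He (Suc n) - smult (real (Suc n)) (He n)"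

lemma LL_pCons0: "LL (pCons 0 p) = LL (pderiv p)"
  using LL_stein[of p] by simp
lemma LL_0 [simp]: "LL 0 = 0"
proof -
  have "poly 0 = (\<lambda>x::real. 0)" by auto
  then show ?thesis by (simp add: LL_def)
qed
lemma LL_const [simp]: "LL [:c:] = c"
  using LL_monom[of c 0] by (simp add: monom_0)

lemma pderiv_X: "pderiv [:0,1::real:] = 1"
  by (simp add: pderiv_pCons)

lemma pderiv_He: "pderiv (He (Suc n)) = smult (real (Suc n)) (He n)"
proof (induction n rule: less_induct)
  case (less n)
  show ?case
  proof (cases n)
    case 0 then show ?thesis by (simp add: pderiv_X)
  next
    case (Suc k)
    have IH1: "pderiv (He (Suc k)) = smult (real (Suc k)) (He k)" using less Suc by simp
    show ?thesis
    proof (cases k)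
      case 0
      then show ?thesis using Suc IH1
        by (simp add: pderiv_pCons)
    next
      case (Suc k')
      have IH2: "pderiv (He k) = smult (real k) (He k')" using less Suc \<open>n = Suc k\<close> by simp
      have "pderiv (He (Suc n)) = He (Suc k) + [:0,1:] * smult (real (Suc k)) (He k)
              - smult (real (Suc k)) (smult (real k) (He k'))"
        using \<open>n = Suc k\<close> IH1 IH2 by (simp add: pderiv_mult pderiv_X pderiv_diff pderiv_smult pderiv_pCons)
      also have "\<dots> = He (Suc k) + smult (real (Suc k)) ([:0,1:] * He k - smult (real k) (He k'))"
        by (simp add: algebra_simps smult_diff_right)
      also have "[:0,1:] * He k - smult (real k) (He k') = He (Suc k)"
        using Suc by simp
      finally have "pderiv (He (Suc n)) = He (Suc k) + smult (real (Suc k)) (He (Suc k))" .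
      moreover have "He (Suc k) + smult (real (Suc k)) (He (Suc k)) = smult (real (Suc (Suc k))) (He (Suc k))"
      proof -
        have "smult (real (Suc (Suc k))) (He (Suc k)) = smult (1 + real (Suc k)) (He (Suc k))"
          by simp
        also have "\<dots> = smult 1 (He (Suc k)) + smult (real (Suc k)) (He (Suc k))"
          by (rule smult_add_left)
        finally show ?thesis by simp
      qed
      ultimately show ?thesis using \<open>n = Suc k\<close> by simp
    qed
  qed
qed

lemma LL_He_Suc: "LL (p * He (Suc j)) = LL (pderiv p * He j)"
proof (cases j)
  case 0
  then show ?thesis using LL_stein[of p] by (simp add: mult.commute)
next
  case (Suc k)
  have "p * He (Suc j) = [:0,1:] * (p * He (Suc k)) - smult (real (Suc k)) (p * He k)"
    unfolding Suc by (simp only: He.simps right_diff_distrib mult_smult_right mult.left_commute)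
  then have "LL (p * He (Suc j)) = LL (pderiv (p * He (Suc k))) - real (Suc k) * LL (p * He k)"
    by (simp add: LL_diff LL_smult LL_pCons0)
  also have "pderiv (p * He (Suc k)) = pderiv p * He (Suc k) + smult (real (Suc k)) (p * He k)"
    by (simp add: pderiv_mult pderiv_He)
  finally show ?thesis using Suc by (simp add: LL_add LL_smult)
qed

lemma funpow_Suc': "(f ^^ Suc j) p = (f ^^ j) (f p)"
  by (simp only: funpow_Suc_right o_apply)

lemma LL_He: "LL (p * He j) = LL ((pderiv ^^ j) p)"
proof (induction j arbitrary: p)
  case 0 then show ?case by simp
next
  case (Suc j)
  have "LL (p * He (Suc j)) = LL (pderiv p * He j)" by (rule LL_He_Suc)
  also have "\<dots> = LL ((pderiv ^^ j) (pderiv p))" by (rule Suc.IH)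
  also have "\<dots> = LL ((pderiv ^^ Suc j) p)" by (simp only: funpow_Suc')
  finally show ?case .
qed

lemma pderiv_iter_0: "(pderiv ^^ k) 0 = (0::real poly)"
  by (induction k) (auto simp: pderiv_0)

lemma pderiv_iter_zero: "degree (p::real poly) < j \<Longrightarrow> (pderiv ^^ j) p = 0"
proof (induction j arbitrary: p)
  case 0 then show ?case by simp
next
  case (Suc j)
  show ?case
  proof (cases "degree p = 0")
    case True
    have "pderiv p = 0" using True pderiv_eq_0_iff[of p] by (simp only:)
    then show ?thesis by (simp only: funpow_Suc' pderiv_iter_0)
  next
    case False
    have "degree (pderiv p) < j" unfolding degree_pderiv using Suc.prems False by arith
    then have "(pderiv ^^ j) (pderiv p) = 0" by (rule Suc.IH)
    then show ?thesis by (simp only: funpow_Suc')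
  qed
qed

lemma deg_He: "degree (He n) = n \<and> coeff (He n) n = 1"
proof (induction n rule: less_induct)
  case (less n)
  show ?case
  proof (cases n rule: He.cases)
    case 1 then show ?thesis by simp
  next
    case 2 then show ?thesis by simp
  next
    case (3 k)
    have IH1: "degree (He (Suc k)) = Suc k" "coeff (He (Suc k)) (Suc k) = 1"
      using less[of "Suc k"] 3 by auto
    have IH2: "degree (He k) = k" using less[of k] 3 by auto
    have nz: "He (Suc k) \<noteq> 0" using IH1 by auto
    have e: "He n = pCons 0 (He (Suc k)) - smult (real (Suc k)) (He k)"
      using 3 by simp
    have a: "degree (pCons 0 (He (Suc k))) = Suc (Suc k)"
      using nz IH1 by simp
    have a2: "coeff (pCons 0 (He (Suc k))) (Suc (Suc k)) = 1"
      using IH1 by simp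
    have b: "degree (smult (real (Suc k)) (He k)) \<le> k" using IH2 by simp
    then have bc: "coeff (smult (real (Suc k)) (He k)) (Suc (Suc k)) = 0"
      by (intro coeff_eq_0) simp
    have c: "coeff (He n) n = 1" unfolding e using 3 a2 bc by (simp add: coeff_diff)
    have "degree (He n) \<le> n" unfolding e using 3 a b
      by (intro degree_diff_le) simp_all
    moreover have "degree (He n) \<ge> n" using c by (intro le_degree) simp
    ultimately show ?thesis using c by simp
  qed
qed

lemma LL_orth: "degree p < j \<Longrightarrow> LL (p * He j) = 0"
  by (simp add: LL_He pderiv_iter_zero)

lemma pderiv_iter_smult: "(pderiv ^^ k) (smult c p) = smult c ((pderiv ^^ k) p)"
proof (induction k arbitrary: p)
  case 0 then show ?case by simp
next
  case (Suc k)
  show ?case by (simp only: funpow_Suc' pderiv_smult Suc.IH)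
qed

lemma He_iter: "(pderiv ^^ k) (He (k + j)) = smult (fact (k + j) / fact j) (He j)"
proof (induction k)
  case 0 then show ?case by simp
next
  case (Suc k)
  have "(pderiv ^^ Suc k) (He (Suc k + j)) = (pderiv ^^ k) (smult (real (Suc (k + j))) (He (k + j)))"
    by (simp only: funpow_Suc' add_Suc pderiv_He)
  also have "\<dots> = smult (real (Suc (k + j)) * (fact (k + j) / fact j)) (He j)"
    by (simp add: pderiv_iter_smult Suc)
  finally show ?case by (simp add: fact_Suc)
qed

lemma LL_He_sq: "LL (He j * He j) = fact j"
  using He_iter[of j 0] by (simp add: LL_He LL_smult)

lemma LL_He_orth: "i \<noteq> j \<Longrightarrow> LL (He i * He j) = 0"
proof (cases "i < j")
  case True then show ?thesis using deg_He[of i] by (simp add: LL_orth)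
next
  case False
  assume "i \<noteq> j"
  then have "j < i" using False by simp
  then show ?thesis using deg_He[of j] LL_orth[of "He j" i] by (simp add: mult.commute)
qed

lemma LL_HeHe: "LL (He i * He j) = (if i = j then fact j else 0)"
  by (simp add: LL_He_sq LL_He_orth)



lemma deg_r_less:
  fixes p :: "real poly"
  assumes "degree p = n" "n > 0"
  shows "degree (p - smult (coeff p n) (He n)) < n"
proof -
  define r where "r = p - smult (coeff p n) (He n)"
  have h: "degree (He n) = n" "coeff (He n) n = 1" using deg_He[of n] by auto
  have le: "degree r \<le> n" unfolding r_def using assms h by (intro degree_diff_le) simp_all
  have c: "coeff r n = 0" using h by (simp add: r_def)
  have "degree r < n"
  proof (rule ccontr)
    assume "\<not> degree r < n"
    then have dn: "degree r = n" using le by simp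
    then have "lead_coeff r = 0" using c by (simp only:)
    then have "r = 0" by (simp only: leading_coeff_0_iff)
    then show False using dn assms by simp
  qed
  then show ?thesis by (simp only: r_def)
qed

lemma He_expand: "p = (\<Sum>j\<le>degree p. smult (LL (p * He j) / fact j) (He j))"
proof (induction "degree p" arbitrary: p rule: less_induct)
  case less
  define n where "n = degree p"
  define a where "a = coeff p n"
  define r where "r = p - smult a (He n)"
  have pr: "p = r + smult a (He n)" by (simp add: r_def)
  have LLp: "LL (p * He j) / fact j = LL (r * He j) / fact j + (if j = n then a else 0)" for j
  proof -
    have "LL (p * He j) = LL (r * He j) + a * LL (He n * He j)"
      unfolding pr by (simp add: distrib_right LL_add LL_smult)
    then show ?thesis by (simp add: LL_HeHe add_divide_distrib)
  qed
  have rexp: "r = (\<Sum>j\<le>n. smult (LL (r * He j) / fact j) (He j))"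
  proof (cases "n = 0")
    case True
    have "r = 0"
    proof (rule poly_eqI)
      fix i
      show "coeff r i = coeff 0 i"
      proof (cases i)
        case 0 then show ?thesis using True by (simp add: r_def a_def)
      next
        case (Suc i')
        then have "coeff p i = 0" using True n_def by (intro coeff_eq_0) simp
        then show ?thesis using True Suc by (simp add: r_def)
      qed
    qed
    then show ?thesis by simp
  next
    case False
    have dr: "degree r < n" unfolding r_def a_def using deg_r_less[of p n] False n_def by simp
    then have "r = (\<Sum>j\<le>degree r. smult (LL (r * He j) / fact j) (He j))"
      by (intro less(1)) (simp add: n_def)
    also have "\<dots> = (\<Sum>j\<le>n. smult (LL (r * He j) / fact j) (He j))"
      using dr by (intro sum.mono_neutral_left) (auto simp: LL_orth)
    finally show ?thesis .
  qed
  have "(\<Sum>j\<le>n. smult (LL (p * He j) / fact j) (He j))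
      = (\<Sum>j\<le>n. smult (LL (r * He j) / fact j) (He j) + (if j = n then smult a (He n) else 0))"
    unfolding LLp by (intro sum.cong refl) (simp add: smult_add_left)
  also have "\<dots> = r + smult a (He n)"
    by (simp add: sum.distrib rexp[symmetric])
  also have "\<dots> = p" using pr by (rule sym)
  finally have eq: "(\<Sum>j\<le>n. smult (LL (p * He j) / fact j) (He j)) = p" .
  show ?case unfolding n_def[symmetric] using eq by (rule sym)
qed

lemma He_dual: "(\<Sum>j\<le>s. LL (monom 1 s * He j) / fact j * coeff (He j) t) = (if s = t then 1 else 0)"
proof -
  have d: "degree (monom (1::real) s) = s" by (simp add: degree_monom_eq)
  have e: "monom (1::real) s = (\<Sum>j\<le>s. smult (LL (monom 1 s * He j) / fact j) (He j))"
    using He_expand[of "monom 1 s", unfolded d] .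
  have "coeff (monom (1::real) s) t = coeff (\<Sum>j\<le>s. smult (LL (monom 1 s * He j) / fact j) (He j)) t"
    using e by (rule arg_cong)
  then show ?thesis by (simp only: coeff_sum coeff_smult) (simp add: coeff_monom)
qed

lemma He_coeff_bound: "(coeff (He j) t)^2 \<le> 2^j * fact j"
proof (induction j arbitrary: t rule: less_induct)
  case (less j)
  show ?case
  proof (cases j rule: He.cases)
    case 1 then show ?thesis by (simp add: coeff_1)
  next
    case 2 then show ?thesis by (cases t) (auto simp: coeff_pCons split: nat.splits)
  next
    case (3 k)
    define a where "a = coeff (pCons 0 (He (Suc k))) t"
    define b where "b = coeff (He k) t"
    define A :: real where "A = 2^k * fact k"
    define c :: real where "c = real (Suc k)"
    have A0: "A \<ge> 0" by (simp add: A_def)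
    have ha: "a^2 \<le> 2 * c * A"
    proof (cases t)
      case 0 then show ?thesis using A0 by (simp add: a_def c_def)
    next
      case (Suc t')
      then have "a = coeff (He (Suc k)) t'" by (simp add: a_def)
      then have "a^2 \<le> 2^(Suc k) * fact (Suc k)" using less[of "Suc k"] 3 by simp
      moreover have "(2::real)^(Suc k) * fact (Suc k) = 2 * c * A"
        by (simp add: A_def c_def algebra_simps)
      ultimately show ?thesis by simp
    qed
    have hb: "b^2 \<le> A" using less[of k] 3 by (simp add: b_def A_def)
    have ej: "coeff (He j) t = a - c * b" using 3 by (simp add: a_def b_def c_def)
    have sq: "(a - c*b)^2 \<le> 2*a^2 + 2*(c^2*b^2)"
    proof -
      have "0 \<le> (a + c*b)^2" by simp
      then show ?thesis by (simp add: power2_eq_square algebra_simps)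
    qed
    have c2: "c^2 * b^2 \<le> c^2 * A" using hb by (intro mult_left_mono) simp_all
    have "2*a^2 + 2*(c^2*b^2) \<le> 4*c*A + 2*c^2*A" using ha c2 by linarith
    also have "\<dots> = 2*c*A*(2 + c)" by (simp add: power2_eq_square algebra_simps)
    also have "\<dots> \<le> 2*c*A*(2*(c+1))"
      using A0 by (intro mult_left_mono) (simp_all add: c_def)
    also have "\<dots> = 2^j * fact j" using 3 by (simp add: A_def c_def algebra_simps)
    finally show ?thesis using ej sq by simp
  qed
qed



lemma NN_prob: "prob_space NN"
  using prob_space_normal_density[of 1 0] by simp

lemma gauss_prod:
  "integrable (gauss l) (\<lambda>x. \<Prod>i<l. poly (P i) (x i)) \<and>
   integral\<^sup>L (gauss l) (\<lambda>x. \<Prod>i<l. poly (P i) (x i)) = (\<Prod>i<l. LL (P i))"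
proof -
  interpret product_sigma_finite "\<lambda>_::nat. NN"
    unfolding product_sigma_finite_def
    using NN_prob prob_space_imp_sigma_finite by blast
  have "integrable (PiM {..<l} (\<lambda>_. NN)) (\<lambda>x. \<Prod>i<l. poly (P i) (x i))"
    by (rule product_integrable_prod) (auto simp: NN_integrable_poly)
  moreover have "integral\<^sup>L (PiM {..<l} (\<lambda>_. NN)) (\<lambda>x. \<Prod>i<l. poly (P i) (x i)) = (\<Prod>i<l. LL (P i))"
    by (subst product_integral_prod) (auto simp: NN_integrable_poly LL_def)
  ultimately show ?thesis unfolding gauss_def by simp
qed

definition PF :: "nat \<Rightarrow> 'a set \<Rightarrow> ('a \<Rightarrow> real) \<Rightarrow> ('a \<Rightarrow> nat \<Rightarrow> real poly) \<Rightarrow> (nat \<Rightarrow> real) \<Rightarrow> real" where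
  "PF l A \<alpha> P x = (\<Sum>a\<in>A. \<alpha> a * (\<Prod>i<l. poly (P a i) (x i)))"

lemma PF_mult:
  assumes "finite A" "finite B"
  shows "integrable (gauss l) (\<lambda>x. PF l A \<alpha> P x * PF l B \<beta> Q x) \<and>
         integral\<^sup>L (gauss l) (\<lambda>x. PF l A \<alpha> P x * PF l B \<beta> Q x) =
           (\<Sum>a\<in>A. \<Sum>b\<in>B. \<alpha> a * \<beta> b * (\<Prod>i<l. LL (P a i * Q b i)))"
proof -
  have e: "(\<lambda>x. PF l A \<alpha> P x * PF l B \<beta> Q x) =
        (\<lambda>x. \<Sum>a\<in>A. \<Sum>b\<in>B. \<alpha> a * \<beta> b * (\<Prod>i<l. poly (P a i * Q b i) (x i)))"
    by (rule ext) (simp add: PF_def sum_product prod.distrib poly_mult mult_ac)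
  have i: "integrable (gauss l) (\<lambda>x. \<Prod>i<l. poly (P a i * Q b i) (x i))" for a b
    using gauss_prod[of l "\<lambda>i. P a i * Q b i"] by simp
  have v: "integral\<^sup>L (gauss l) (\<lambda>x. \<Prod>i<l. poly (P a i * Q b i) (x i)) = (\<Prod>i<l. LL (P a i * Q b i))" for a b
    using gauss_prod[of l "\<lambda>i. P a i * Q b i"] by simp
  show ?thesis unfolding e
    using i v by (simp add: integrable_sum integral_sum)
qed

lemma chi_prod: "set_mset S \<subseteq> {..<l} \<Longrightarrow> chi S x = (\<Prod>i<l. x i ^ count S i)"
proof (induction S rule: multiset_induct)
  case empty then show ?case by (simp add: chi_def)
next
  case (add a S)
  then have al: "a < l" and IH: "chi S x = (\<Prod>i<l. x i ^ count S i)" by auto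
  have "chi (add_mset a S) x = x a * chi S x" by (simp add: chi_def)
  also have "\<dots> = (\<Prod>i<l. (if i = a then x i else 1)) * (\<Prod>i<l. x i ^ count S i)"
    using al by (simp add: IH prod.delta)
  also have "\<dots> = (\<Prod>i<l. x i ^ count (add_mset a S) i)"
    by (subst prod.distrib[symmetric]) (intro prod.cong, auto)
  finally show ?case .
qed

lemma size_sum: "set_mset (S::nat multiset) \<subseteq> {..<l} \<Longrightarrow> size S = (\<Sum>i<l. count S i)"
proof (induction S rule: multiset_induct)
  case empty then show ?case by simp
next
  case (add a S)
  then have al: "a < l" and IH: "size S = (\<Sum>i<l. count S i)" by auto
  have "(\<Sum>i<l. count (add_mset a S) i) = (\<Sum>i<l. (if i = a then 1 else 0) + count S i)"
    by (intro sum.cong) auto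
  also have "\<dots> = (\<Sum>i<l. (if i = a then 1 else 0)) + size S" by (simp add: sum.distrib IH)
  also have "(\<Sum>i<l. (if i = a then 1 else 0::nat)) = 1" using al by (subst sum.delta) auto
  finally show ?case by simp
qed

lemma finite_mono_idx: "finite (mono_idx l d)"
proof -
  have "mono_idx l d = (\<Union>n\<le>d. multisets_of_size {..<l} n)"
    by (auto simp: mono_idx_def multisets_of_size_def)
  then show ?thesis by (auto intro: finite_multisets_of_size)
qed

lemma card_mono_idx: "card (mono_idx l d) \<le> (l + d) choose d"
proof -
  let ?g = "\<lambda>S. S + replicate_mset (d - size S) l"
  have inj: "inj_on ?g (mono_idx l d)"
  proof (rule inj_onI)
    fix S1 S2 assume S1: "S1 \<in> mono_idx l d" and S2: "S2 \<in> mono_idx l d" and eq: "?g S1 = ?g S2"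
    show "S1 = S2"
    proof (rule multiset_eqI)
      fix k
      show "count S1 k = count S2 k"
      proof (cases "k < l")
        case True
        then have "count (?g S1) k = count S1 k" "count (?g S2) k = count S2 k" by auto
        then show ?thesis using eq by simp
      next
        case False
        then have "k \<notin># S1" "k \<notin># S2" using S1 S2 by (auto simp: mono_idx_def)
        then show ?thesis by (simp add: not_in_iff)
      qed
    qed
  qed
  have sub: "?g ` mono_idx l d \<subseteq> multisets_of_size {..<Suc l} d"
    by (fastforce simp: mono_idx_def multisets_of_size_def split: if_splits)
  have "card (mono_idx l d) = card (?g ` mono_idx l d)" using inj by (simp add: card_image)
  also have "\<dots> \<le> card (multisets_of_size {..<Suc l} d)"
    using sub by (intro card_mono) (auto intro: finite_multisets_of_size)
  also have "\<dots> = (l + d) choose d" by (simp add: card_multisets_of_size)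
  finally show ?thesis .
qed



theorem mainTheorem5:
  fixes l d :: nat and c :: "nat multiset \<Rightarrow> real" and T :: "nat multiset"
  assumes "l \<ge> 1" and "d \<ge> 1" and "T \<in> mono_idx l d"
  shows "L2norm (gauss l) (poly_f l d c)
           \<ge> (1 / real d ^ d) * \<bar>c T\<bar> / real ((l + d) choose d)"
proof -
  define M where "M = mono_idx l d"
  have finM: "finite M" by (simp add: M_def finite_mono_idx)
  have TM: "T \<in> M" using assms(3) by (simp add: M_def)
  have Msub: "\<And>S. S \<in> M \<Longrightarrow> set_mset S \<subseteq> {..<l} \<and> size S \<le> d" by (simp add: M_def mono_idx_def)
  define Jset where "Jset = (\<lambda>J. restrict (count J) {..<l}) ` M"
  have finJ: "finite Jset" using finM by (simp add: Jset_def)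
  have Jext: "\<And>e. e \<in> Jset \<Longrightarrow> e \<in> extensional {..<l}" by (auto simp: Jset_def)
  have Jsum: "\<And>e. e \<in> Jset \<Longrightarrow> (\<Sum>i<l. e i) \<le> d"
  proof -
    fix e assume "e \<in> Jset"
    then obtain J where J: "J \<in> M" "e = restrict (count J) {..<l}" by (auto simp: Jset_def)
    have "(\<Sum>i<l. e i) = (\<Sum>i<l. count J i)" using J by simp
    also have "\<dots> = size J" using Msub[OF J(1)] size_sum by metis
    finally show "(\<Sum>i<l. e i) \<le> d" using Msub[OF J(1)] by simp
  qed
  define w where "w e = (\<Prod>i<l. coeff (He (e i)) (count T i) / fact (e i))" for e :: "nat \<Rightarrow> nat"
  define Pf where "Pf S i = monom (1::real) (count S i)" for S :: "nat multiset" and i :: nat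
  define Pq where "Pq e i = He (e i)" for e :: "nat \<Rightarrow> nat" and i :: nat
  define f where "f = PF l M c Pf"
  define q where "q = PF l Jset w Pq"
  have f_eq: "poly_f l d c = f"
  proof (rule ext)
    fix x
    show "poly_f l d c x = f x"
      unfolding poly_f_def f_def PF_def M_def[symmetric]
    proof (intro sum.cong refl)
      fix S assume "S \<in> M"
      then have "chi S x = (\<Prod>i<l. x i ^ count S i)" using Msub chi_prod by blast
      then show "c S * chi S x = c S * (\<Prod>i<l. poly (Pf S i) (x i))"
        by (simp add: Pf_def poly_monom)
    qed
  qed
  have ff: "integrable (gauss l) (\<lambda>x. f x * f x)"
    using PF_mult[OF finM finM] unfolding f_def by blast
  have fq: "integrable (gauss l) (\<lambda>x. f x * q x)"
    using PF_mult[OF finM finJ] unfolding f_def q_def by blast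
  have qq: "integrable (gauss l) (\<lambda>x. q x * q x)"
    using PF_mult[OF finJ finJ] unfolding q_def by blast

  have key: "(\<Sum>e\<in>Jset. w e * (\<Prod>i<l. LL (Pf S i * Pq e i))) = (if S = T then 1 else 0)"
    if S: "S \<in> M" for S
  proof -
    define g where "g i j = LL (monom 1 (count S i) * He j) / fact j * coeff (He j) (count T i)" for i j
    have t1: "w e * (\<Prod>i<l. LL (Pf S i * Pq e i)) = (\<Prod>i<l. g i (e i))" for e
      unfolding w_def prod.distrib[symmetric]
      by (intro prod.cong refl) (simp add: g_def Pf_def Pq_def)
    define B where "B = PiE {..<l} (\<lambda>i. {..count S i})"
    have finB: "finite B" by (simp add: B_def finite_PiE)
    have BJ: "B \<subseteq> Jset"
    proof
      fix e assume eB: "e \<in> B"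
      define J where "J = (\<Sum>i<l. replicate_mset (e i) i)"
      have cJ: "count J k = (if k < l then e k else 0)" for k
      proof -
        have "count J k = (\<Sum>i<l. if k = i then e i else 0)"
          unfolding J_def count_sum by (intro sum.cong refl) simp
        also have "\<dots> = (if k < l then e k else 0)" by (subst sum.delta') auto
        finally show ?thesis .
      qed
      have sJ: "set_mset J \<subseteq> {..<l}"
      proof
        fix k assume "k \<in># J"
        then have "count J k > 0" by simp
        then show "k \<in> {..<l}" using cJ[of k] by (simp split: if_splits)
      qed
      have le: "e i \<le> count S i" if "i < l" for i using eB that by (auto simp: B_def PiE_iff)
      have "size J = (\<Sum>i<l. count J i)" using sJ size_sum by metis
      also have "\<dots> = (\<Sum>i<l. e i)" by (intro sum.cong refl) (simp add: cJ)
      also have "\<dots> \<le> (\<Sum>i<l. count S i)" using le by (intro sum_mono) simp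
      also have "\<dots> = size S" using Msub[OF S] size_sum by metis
      also have "\<dots> \<le> d" using Msub[OF S] by simp
      finally have "J \<in> M" using sJ by (simp add: M_def mono_idx_def)
      moreover have "restrict (count J) {..<l} = e"
      proof (rule ext)
        fix k show "restrict (count J) {..<l} k = e k"
        proof (cases "k < l")
          case True then show ?thesis by (simp add: cJ)
        next
          case False
          then have "e k = undefined" using eB by (auto simp: B_def PiE_iff extensional_def)
          then show ?thesis using False by simp
        qed
      qed
      ultimately show "e \<in> Jset" unfolding Jset_def by (metis image_eqI)
    qed
    have zero: "(\<Prod>i<l. g i (e i)) = 0" if eJ: "e \<in> Jset - B" for e
    proof -
      have "e \<in> extensional {..<l}" using Jext eJ by blast
      then obtain i where i: "i < l" "e i > count S i" using eJ by (force simp: B_def PiE_iff)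
      have "g i (e i) = 0" unfolding g_def using i
        by (simp add: LL_orth degree_monom_eq)
      then show ?thesis using i by (intro prod_zero) auto
    qed
    have "(\<Sum>e\<in>Jset. w e * (\<Prod>i<l. LL (Pf S i * Pq e i))) = (\<Sum>e\<in>Jset. \<Prod>i<l. g i (e i))"
      by (simp add: t1)
    also have "\<dots> = (\<Sum>e\<in>B. \<Prod>i<l. g i (e i))"
      using finJ BJ zero by (intro sum.mono_neutral_right) auto
    also have "\<dots> = (\<Prod>i<l. \<Sum>j\<le>count S i. g i j)"
      unfolding B_def by (rule prod_sum_PiE[symmetric]) auto
    also have "\<dots> = (\<Prod>i<l. (if count S i = count T i then 1 else 0))"
      unfolding g_def by (intro prod.cong refl) (rule He_dual)
    also have "\<dots> = (if S = T then 1 else 0)"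
    proof (cases "S = T")
      case True then show ?thesis by simp
    next
      case False
      then obtain k where k: "count S k \<noteq> count T k" by (meson multiset_eqI)
      have "k < l"
      proof (rule ccontr)
        assume "\<not> k < l"
        then have "k \<notin># S" "k \<notin># T" using Msub[OF S] Msub[OF TM] by auto
        then show False using k by (simp add: not_in_iff)
      qed
      then show ?thesis using k False by (intro trans[OF prod_zero]) auto
    qed
    finally show ?thesis .
  qed

  have int_fq: "integral\<^sup>L (gauss l) (\<lambda>x. f x * q x) = c T"
  proof -
    have "integral\<^sup>L (gauss l) (\<lambda>x. f x * q x) =
        (\<Sum>S\<in>M. \<Sum>e\<in>Jset. c S * w e * (\<Prod>i<l. LL (Pf S i * Pq e i)))"
      using PF_mult[OF finM finJ] unfolding f_def q_def by blast
    also have "\<dots> = (\<Sum>S\<in>M. c S * (\<Sum>e\<in>Jset. w e * (\<Prod>i<l. LL (Pf S i * Pq e i))))"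
      by (simp add: sum_distrib_left mult.assoc)
    also have "\<dots> = (\<Sum>S\<in>M. c S * (if S = T then 1 else 0))"
      using key by (intro sum.cong refl) simp
    also have "\<dots> = c T" using finM TM by (simp add: if_distrib sum.delta cong: if_cong)
    finally show ?thesis .
  qed

  define K :: real where "K = 2^d * real (card M)"
  have int_qq: "integral\<^sup>L (gauss l) (\<lambda>x. q x * q x) \<le> K"
  proof -
    have inner: "(\<Sum>e'\<in>Jset. w e * w e' * (\<Prod>i<l. LL (Pq e i * Pq e' i)))
               = w e * w e * (\<Prod>i<l. fact (e i))" if eJ: "e \<in> Jset" for e
    proof -
      have "(\<Sum>e'\<in>Jset. w e * w e' * (\<Prod>i<l. LL (Pq e i * Pq e' i)))
          = (\<Sum>e'\<in>Jset. if e' = e then w e * w e * (\<Prod>i<l. fact (e i)) else 0)"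
      proof (intro sum.cong refl)
        fix e' assume e'J: "e' \<in> Jset"
        show "w e * w e' * (\<Prod>i<l. LL (Pq e i * Pq e' i)) = (if e' = e then w e * w e * (\<Prod>i<l. fact (e i)) else 0)"
        proof (cases "e' = e")
          case True then show ?thesis by (simp add: Pq_def LL_He_sq)
        next
          case False
          have "\<exists>i<l. e i \<noteq> e' i"
          proof (rule ccontr)
            assume "\<not> ?thesis"
            then have "e = e'" using Jext[OF eJ] Jext[OF e'J]
              by (intro extensionalityI[of _ "{..<l}"]) auto
            then show False using False by simp
          qed
          then obtain i where "i < l" "e i \<noteq> e' i" by blast
          then have "(\<Prod>i<l. LL (Pq e i * Pq e' i)) = 0"
            by (intro prod_zero bexI[of _ i]) (auto simp: Pq_def LL_He_orth)
          then show ?thesis using False by simp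
        qed
      qed
      also have "\<dots> = w e * w e * (\<Prod>i<l. fact (e i))" using finJ eJ by (simp add: sum.delta)
      finally show ?thesis .
    qed
    have bnd: "w e * w e * (\<Prod>i<l. fact (e i)) \<le> 2^d" if eJ: "e \<in> Jset" for e
    proof -
      have "w e * w e * (\<Prod>i<l. fact (e i)) = (\<Prod>i<l. (coeff (He (e i)) (count T i))^2 / fact (e i))"
        unfolding w_def prod.distrib[symmetric]
        by (intro prod.cong refl) (simp add: power2_eq_square)
      also have "\<dots> \<le> (\<Prod>i<l. 2 ^ (e i))"
      proof (intro prod_mono conjI)
        fix i
        show "0 \<le> (coeff (He (e i)) (count T i))^2 / fact (e i)" by simp
        have "(coeff (He (e i)) (count T i))^2 \<le> 2 ^ (e i) * fact (e i)" by (rule He_coeff_bound)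
        then show "(coeff (He (e i)) (count T i))^2 / fact (e i) \<le> 2 ^ (e i)"
          by (simp add: divide_le_eq)
      qed
      also have "\<dots> = 2 ^ (\<Sum>i<l. e i)" by (simp add: power_sum)
      also have "\<dots> \<le> 2 ^ d" using Jsum[OF eJ] by (intro power_increasing) simp_all
      finally show ?thesis .
    qed
    have "integral\<^sup>L (gauss l) (\<lambda>x. q x * q x) =
        (\<Sum>e\<in>Jset. \<Sum>e'\<in>Jset. w e * w e' * (\<Prod>i<l. LL (Pq e i * Pq e' i)))"
      using PF_mult[OF finJ finJ] unfolding q_def by blast
    also have "\<dots> = (\<Sum>e\<in>Jset. w e * w e * (\<Prod>i<l. fact (e i)))"
      using inner by (intro sum.cong refl) simp
    also have "\<dots> \<le> real (card Jset) * 2^d"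
      using bnd by (intro sum_bounded_above) simp
    also have "\<dots> \<le> real (card M) * 2^d"
      unfolding Jset_def using card_image_le[OF finM] by (intro mult_right_mono) simp_all
    finally show ?thesis by (simp add: K_def mult.commute)
  qed

  define A where "A = integral\<^sup>L (gauss l) (\<lambda>x. f x * f x)"
  define Q where "Q = integral\<^sup>L (gauss l) (\<lambda>x. q x * q x)"
  have Q0: "Q \<ge> 0" unfolding Q_def by (rule integral_nonneg_AE) simp
  have "(l + d) choose d > 0" by (simp add: zero_less_binomial_iff)
  then have CC: "real ((l + d) choose d) \<ge> 1" by linarith
  have Kpos: "K > 0"
  proof -
    have "card M > 0" using finM TM by (simp add: card_gt_0_iff) blast
    then show ?thesis by (simp add: K_def)
  qed
  have quad: "0 \<le> A - 2 * t * c T + t^2 * Q" for t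
  proof -
    have "0 \<le> integral\<^sup>L (gauss l) (\<lambda>x. (f x - t * q x)^2)" by (rule integral_nonneg_AE) simp
    also have "(\<lambda>x. (f x - t * q x)^2) = (\<lambda>x. f x * f x + ((- 2 * t) * (f x * q x) + t^2 * (q x * q x)))"
      by (rule ext) (simp add: power2_eq_square algebra_simps)
    also have "integral\<^sup>L (gauss l) \<dots> = A - 2 * t * c T + t^2 * Q"
      using ff fq qq by (simp add: A_def Q_def int_fq)
    finally show ?thesis .
  qed
  have cK: "(c T)^2 \<le> K * A"
  proof -
    define t where "t = c T / K"
    have "0 \<le> A - 2 * t * c T + t^2 * Q" by (rule quad)
    also have "t^2 * Q \<le> t^2 * K" using int_qq by (intro mult_left_mono) (simp_all add: Q_def)
    finally have "0 \<le> A - 2 * t * c T + t^2 * K" by simp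
    also have "A - 2 * t * c T + t^2 * K = A - (c T)^2 / K"
      using Kpos by (simp add: t_def power2_eq_square field_simps)
    finally show ?thesis using Kpos by (simp add: field_simps)
  qed
  define C where "C = real ((l + d) choose d)"
  have KC: "K \<le> (real d ^ d * C)^2"
  proof -
    have cardM: "real (card M) \<le> C" unfolding C_def M_def using card_mono_idx by simp
    have C1: "C \<ge> 1" using CC by (simp add: C_def)
    show ?thesis
    proof (cases "d = 1")
      case True
      have "C = real l + 1" unfolding C_def using True by simp
      then have "2 \<le> C" using assms(1) by simp
      then have "2 * C \<le> C * C" using C1 by (intro mult_right_mono) simp_all
      then show ?thesis using True cardM unfolding K_def by (simp add: power2_eq_square)
    next
      case False
      then have d2: "d \<ge> 2" using assms(2) by simp
      have "(2::real)^d \<le> real d ^ d" using d2 by (intro power_mono) simp_all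
      also have "\<dots> \<le> real d ^ d * real d ^ d" using d2 by simp
      finally have a: "(2::real)^d \<le> real d ^ d * real d ^ d" .
      have b: "real (card M) \<le> C * C" using cardM C1 by (smt (verit) mult_le_cancel_left1)
      have "K \<le> (real d ^ d * real d ^ d) * (C * C)"
        unfolding K_def using a b by (intro mult_mono) simp_all
      then show ?thesis by (simp add: power2_eq_square mult_ac)
    qed
  qed
  have A0: "A \<ge> 0" unfolding A_def by (rule integral_nonneg_AE) simp
  have "(c T)^2 \<le> (real d ^ d * C)^2 * A"
    using cK KC A0 by (meson mult_right_mono order_trans)
  then have "\<bar>c T\<bar> \<le> real d ^ d * C * sqrt A"
    by (metis abs_of_nonneg real_sqrt_abs real_sqrt_le_mono real_sqrt_mult
        real_sqrt_power zero_le_mult_iff zero_le_power2 A0 CC C_def mult_nonneg_nonneg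
        of_nat_0_le_iff zero_le_power)
  moreover have "L2norm (gauss l) (poly_f l d c) = sqrt A"
    unfolding L2norm_def A_def f_eq by (simp add: power2_eq_square)
  moreover have "real d ^ d * C > 0" using assms(2) CC by (simp add: C_def)
  ultimately show ?thesis unfolding C_def[symmetric]
    by (simp add: field_simps)
qed

end
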